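(* Let $G=(V,E)$ be a Generalized Bartlett graph. If $V'\subset V$ and $G'=(V',E')$ is the induced subgraph of $G$ on $V'$, then $G'$ is also a Generalized Bartlett graph.
   Context: For a graph $(V,E)$ with $|V|=p$ and ordering $\sigma:V\to\{1,\dots,p\}$, set $E^\sigma_0=E$, $E^\sigma_i=E^\sigma_{i-1}\cup\{\{u,v\}:u\ne v,\sigma(u)>i,\sigma(v)>i,\{u,\sigma^{-1}(i)\},\{v,\sigma^{-1}(i)\}\in E^\sigma_{i-1}\}$ for $i=1,\dots,p-2$, and $D^\sigma(E)=E^\sigma_{p-2}$. The graph is Generalized Bartlett if there is an ordering $\sigma$ such that there are no $u,v,w$ with $\{u,v\},\{v,w\},\{u,w\}\notin E$ but all three in $D^\sigma(E)$. *)

theory Defs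
  imports Main
begin

definition simple_graph :: "'a set \<Rightarrow> 'a set set \<Rightarrow> bool" where
  "simple_graph V E \<longleftrightarrow> finite V \<and>
     (\<forall>e\<in>E. \<exists>u v. u \<in> V \<and> v \<in> V \<and> u \<noteq> v \<and> e = {u, v})"

definition elim_step :: "'a set \<Rightarrow> ('a \<Rightarrow> nat) \<Rightarrow> nat \<Rightarrow> 'a set set \<Rightarrow> 'a set set" where
  "elim_step V \<sigma> i F = F \<union> {{u, v} | u v. u \<noteq> v \<and> \<sigma> u > i \<and> \<sigma> v > i \<and>
       {u, inv_into V \<sigma> i} \<in> F \<and> {v, inv_into V \<sigma> i} \<in> F}"

fun elim_seq :: "'a set \<Rightarrow> ('a \<Rightarrow> nat) \<Rightarrow> 'a set set \<Rightarrow> nat \<Rightarrow> 'a set set" where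
  "elim_seq V \<sigma> E 0 = E"
| "elim_seq V \<sigma> E (Suc i) = elim_step V \<sigma> (Suc i) (elim_seq V \<sigma> E i)"

text \<open>D^sigma(E) = E^sigma_(p-2), with p = |V| (for p < 2 no steps: D = E).\<close>
definition D_sigma :: "'a set \<Rightarrow> ('a \<Rightarrow> nat) \<Rightarrow> 'a set set \<Rightarrow> 'a set set" where
  "D_sigma V \<sigma> E = elim_seq V \<sigma> E (card V - 2)"

definition generalized_bartlett :: "'a set \<Rightarrow> 'a set set \<Rightarrow> bool" where
  "generalized_bartlett V E \<longleftrightarrow>
     (\<exists>\<sigma>. bij_betw \<sigma> V {1..card V} \<and>
        \<not> (\<exists>u v w. {u, v} \<notin> E \<and> {v, w} \<notin> E \<and> {u, w} \<notin> E \<and>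
               {u, v} \<in> D_sigma V \<sigma> E \<and> {v, w} \<in> D_sigma V \<sigma> E \<and> {u, w} \<in> D_sigma V \<sigma> E))"

definition induced_edges :: "'a set set \<Rightarrow> 'a set \<Rightarrow> 'a set set" where
  "induced_edges E V' = {e \<in> E. e \<subseteq> V'}"

end

theory Submission
  imports Defs
begin

lemma elim_seq_mono: "i \<le> j \<Longrightarrow> elim_seq V \<sigma> E i \<subseteq> elim_seq V \<sigma> E j"
  by (rule lift_Suc_mono_le[where f="elim_seq V \<sigma> E"]) (auto simp: elim_step_def)

lemma elim_seq_sub: "\<forall>e\<in>E. e \<subseteq> V \<Longrightarrow> \<forall>e\<in>elim_seq V \<sigma> E k. e \<subseteq> V"
  apply (induction k)
   apply simp
  apply (simp add: elim_step_def)
  apply blast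
  done

lemma elim_seq_stab:
  assumes inj: "inj_on \<sigma> V" and rng: "\<sigma> ` V \<subseteq> {1..card V}" and sub: "\<forall>e\<in>E. e \<subseteq> V"
  shows "elim_seq V \<sigma> E k \<subseteq> D_sigma V \<sigma> E"
proof (cases "k \<le> card V - 2")
  case True then show ?thesis unfolding D_sigma_def by (rule elim_seq_mono)
next
  case False
  have stab: "n \<ge> card V - 2 \<Longrightarrow> elim_seq V \<sigma> E n = elim_seq V \<sigma> E (card V - 2)" for n
  proof (induction n rule: dec_induct)
    case base then show ?case by simp
  next
    case (step n)
    have S: "\<forall>e\<in>elim_seq V \<sigma> E n. e \<subseteq> V" using elim_seq_sub[OF sub] by blast
    have "elim_step V \<sigma> (Suc n) (elim_seq V \<sigma> E n) = elim_seq V \<sigma> E n"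
    proof -
      have noedge: False if h: "u \<noteq> v" "\<sigma> u > Suc n" "\<sigma> v > Suc n"
          "{u, inv_into V \<sigma> (Suc n)} \<in> elim_seq V \<sigma> E n" "{v, inv_into V \<sigma> (Suc n)} \<in> elim_seq V \<sigma> E n" for u v
      proof -
        have "u \<in> V" "v \<in> V" using h(4,5) S by blast+
        then have "\<sigma> u \<le> card V" "\<sigma> v \<le> card V" using rng by auto
        then have "\<sigma> u = \<sigma> v" using h(2,3) step(1) by linarith
        then show False using inj \<open>u \<in> V\<close> \<open>v \<in> V\<close> h(1) by (meson inj_onD)
      qed
      have emp: "{{u, v} |u v. u \<noteq> v \<and> \<sigma> u > Suc n \<and> \<sigma> v > Suc n \<and>
          {u, inv_into V \<sigma> (Suc n)} \<in> elim_seq V \<sigma> E n \<and> {v, inv_into V \<sigma> (Suc n)} \<in> elim_seq V \<sigma> E n} = {}"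
      proof (rule equals0I)
        fix z assume "z \<in> {{u, v} |u v. u \<noteq> v \<and> \<sigma> u > Suc n \<and> \<sigma> v > Suc n \<and>
          {u, inv_into V \<sigma> (Suc n)} \<in> elim_seq V \<sigma> E n \<and> {v, inv_into V \<sigma> (Suc n)} \<in> elim_seq V \<sigma> E n}"
        then obtain u v where "u \<noteq> v" "\<sigma> u > Suc n" "\<sigma> v > Suc n"
          "{u, inv_into V \<sigma> (Suc n)} \<in> elim_seq V \<sigma> E n" "{v, inv_into V \<sigma> (Suc n)} \<in> elim_seq V \<sigma> E n"
          by blast
        then show False by (rule noedge)
      qed
      show ?thesis unfolding elim_step_def emp by simp
    qed
    then show ?case using step by simp
  qed
  have "elim_seq V \<sigma> E k = elim_seq V \<sigma> E (card V - 2)" using False by (intro stab) simp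
  then show ?thesis unfolding D_sigma_def by simp
qed

theorem lemma11:
  fixes V V' :: "'a set" and E :: "'a set set"
  assumes "simple_graph V E"
    and "generalized_bartlett V E"
    and "V' \<subseteq> V"
  shows "generalized_bartlett V' (induced_edges E V')"
proof -
  define E' where "E' = induced_edges E V'"
  obtain \<sigma> where bij: "bij_betw \<sigma> V {1..card V}" and nobad:
    "\<not> (\<exists>u v w. {u, v} \<notin> E \<and> {v, w} \<notin> E \<and> {u, w} \<notin> E \<and>
               {u, v} \<in> D_sigma V \<sigma> E \<and> {v, w} \<in> D_sigma V \<sigma> E \<and> {u, w} \<in> D_sigma V \<sigma> E)"
    using assms(2) unfolding generalized_bartlett_def by (elim exE conjE) (rule that)
  have finV: "finite V" using assms(1) unfolding simple_graph_def by blast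
  have finV': "finite V'" using finV assms(3) finite_subset by blast
  have inj: "inj_on \<sigma> V" and rng: "\<sigma> ` V = {1..card V}" using bij by (auto simp: bij_betw_def)
  have Esub: "\<forall>e\<in>E. e \<subseteq> V"
  proof
    fix e assume "e \<in> E"
    then obtain u v where "u \<in> V" "v \<in> V" "e = {u, v}" using assms(1) unfolding simple_graph_def by meson
    then show "e \<subseteq> V" by simp
  qed
  have E'sub: "\<forall>e\<in>E'. e \<subseteq> V'" unfolding E'_def induced_edges_def by blast
  define \<tau> where "\<tau> x = card {y \<in> V'. \<sigma> y \<le> \<sigma> x}" for x
  have lt1: "\<tau> x < \<tau> y" if "x \<in> V'" "y \<in> V'" "\<sigma> x < \<sigma> y" for x y
  proof -
    have "{z \<in> V'. \<sigma> z \<le> \<sigma> x} \<subseteq> {z \<in> V'. \<sigma> z \<le> \<sigma> y}" using that by auto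
    moreover have "y \<in> {z \<in> V'. \<sigma> z \<le> \<sigma> y}" "y \<notin> {z \<in> V'. \<sigma> z \<le> \<sigma> x}" using that by auto
    ultimately have "{z \<in> V'. \<sigma> z \<le> \<sigma> x} \<subset> {z \<in> V'. \<sigma> z \<le> \<sigma> y}" by blast
    then show ?thesis unfolding \<tau>_def using finV' by (intro psubset_card_mono) auto
  qed
  have le1: "\<tau> y \<le> \<tau> x" if "\<sigma> y \<le> \<sigma> x" for x y
    unfolding \<tau>_def using finV' that by (intro card_mono) auto
  have mono_iff: "\<sigma> x < \<sigma> y \<longleftrightarrow> \<tau> x < \<tau> y" if "x \<in> V'" "y \<in> V'" for x y
    using lt1[OF that] le1[of y x] by (meson not_le)
  have injt: "inj_on \<tau> V'"
  proof (rule inj_onI)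
    fix x y assume h: "x \<in> V'" "y \<in> V'" "\<tau> x = \<tau> y"
    show "x = y"
    proof (rule ccontr)
      assume "x \<noteq> y"
      then have "\<sigma> x \<noteq> \<sigma> y" using inj h(1,2) assms(3) by (meson inj_onD subsetD)
      then show False using lt1[OF h(1,2)] lt1[OF h(2,1)] h(3) by linarith
    qed
  qed
  have rngt: "\<tau> ` V' \<subseteq> {1..card V'}"
  proof
    fix t assume "t \<in> \<tau> ` V'"
    then obtain x where x: "x \<in> V'" "t = \<tau> x" by blast
    have "x \<in> {y \<in> V'. \<sigma> y \<le> \<sigma> x}" using x by simp
    then have "\<tau> x \<ge> 1" unfolding \<tau>_def using finV'
      by (metis (no_types, lifting) One_nat_def Suc_leI card_gt_0_iff empty_iff finite_subset mem_Collect_eq subsetI)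
    moreover have "\<tau> x \<le> card V'" unfolding \<tau>_def using finV' by (intro card_mono) auto
    ultimately show "t \<in> {1..card V'}" using x by simp
  qed
  have "\<tau> ` V' = {1..card V'}"
    using card_subset_eq[OF _ rngt] card_image[OF injt] by simp
  then have bijt: "bij_betw \<tau> V' {1..card V'}" using injt by (simp add: bij_betw_def)
  define g where "g j = (if j = 0 then 0 else \<sigma> (inv_into V' \<tau> j))" for j
  have key: "j \<le> card V' \<Longrightarrow> elim_seq V' \<tau> E' j \<subseteq> elim_seq V \<sigma> E (g j)" for j
  proof (induction j)
    case 0 then show ?case by (simp add: g_def E'_def induced_edges_def)
  next
    case (Suc j)
    define x where "x = inv_into V' \<tau> (Suc j)"
    have xV': "x \<in> V'" and tx: "\<tau> x = Suc j"
      using Suc.prems bijt unfolding x_def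
      by (auto intro: inv_into_into simp: bij_betw_def f_inv_into_f)
    have xV: "x \<in> V" using xV' assms(3) by blast
    have sx1: "\<sigma> x \<ge> 1" using rng xV by auto
    have gS: "g (Suc j) = \<sigma> x" by (simp add: g_def x_def)
    have gj: "g j < \<sigma> x"
    proof (cases "j = 0")
      case True then show ?thesis using sx1 by (simp add: g_def)
    next
      case False
      define y where "y = inv_into V' \<tau> j"
      have yV': "y \<in> V'" and ty: "\<tau> y = j"
        using Suc.prems False bijt unfolding y_def
        by (auto intro: inv_into_into simp: bij_betw_def f_inv_into_f)
      have "\<sigma> y < \<sigma> x" using mono_iff[OF yV' xV'] ty tx by simp
      then show ?thesis using False by (simp add: g_def y_def)
    qed
    have IH: "elim_seq V' \<tau> E' j \<subseteq> elim_seq V \<sigma> E (\<sigma> x - 1)"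
    proof -
      have "j \<le> card V'" using Suc.prems by simp
      then have "elim_seq V' \<tau> E' j \<subseteq> elim_seq V \<sigma> E (g j)" by (rule Suc.IH)
      moreover have "elim_seq V \<sigma> E (g j) \<subseteq> elim_seq V \<sigma> E (\<sigma> x - 1)" using gj by (intro elim_seq_mono) simp
      ultimately show ?thesis by blast
    qed
    have eqS: "elim_seq V \<sigma> E (\<sigma> x) = elim_step V \<sigma> (\<sigma> x) (elim_seq V \<sigma> E (\<sigma> x - 1))"
      using sx1 by (metis Suc_diff_1 elim_seq.simps(2) less_eq_Suc_le One_nat_def)
    have invx: "inv_into V \<sigma> (\<sigma> x) = x" using inv_into_f_f[OF inj xV] .
    have S': "\<forall>e\<in>elim_seq V' \<tau> E' j. e \<subseteq> V'" using elim_seq_sub[OF E'sub] by blast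
    have "elim_step V' \<tau> (Suc j) (elim_seq V' \<tau> E' j) \<subseteq> elim_seq V \<sigma> E (\<sigma> x)"
    proof
      fix z assume "z \<in> elim_step V' \<tau> (Suc j) (elim_seq V' \<tau> E' j)"
      then consider "z \<in> elim_seq V' \<tau> E' j"
        | u v where "z = {u, v}" "u \<noteq> v" "\<tau> u > Suc j" "\<tau> v > Suc j"
            "{u, x} \<in> elim_seq V' \<tau> E' j" "{v, x} \<in> elim_seq V' \<tau> E' j"
        unfolding elim_step_def x_def by blast
      then show "z \<in> elim_seq V \<sigma> E (\<sigma> x)"
      proof cases
        case 1 then show ?thesis using IH eqS unfolding elim_step_def by blast
      next
        case 2
        have "u \<in> V'" "v \<in> V'" using 2(5,6) S' by blast+
        then have "\<sigma> u > \<sigma> x" "\<sigma> v > \<sigma> x" using mono_iff xV' tx 2(3,4) by auto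
        moreover have "{u, inv_into V \<sigma> (\<sigma> x)} \<in> elim_seq V \<sigma> E (\<sigma> x - 1)"
          "{v, inv_into V \<sigma> (\<sigma> x)} \<in> elim_seq V \<sigma> E (\<sigma> x - 1)"
          using 2(5,6) IH invx by auto
        ultimately show ?thesis using eqS 2(1,2) unfolding elim_step_def by blast
      qed
    qed
    then show ?case using gS by simp
  qed
  have DD: "D_sigma V' \<tau> E' \<subseteq> D_sigma V \<sigma> E"
    using key[of "card V' - 2"] elim_seq_stab[OF inj _ Esub, of "g (card V' - 2)"] rng
    unfolding D_sigma_def[of V' \<tau> E'] by auto
  have DS: "\<forall>e\<in>D_sigma V' \<tau> E'. e \<subseteq> V'" unfolding D_sigma_def using elim_seq_sub[OF E'sub] by blast
  have notE: "e \<notin> E" if "e \<in> D_sigma V' \<tau> E'" "e \<notin> E'" for e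
    using that DS unfolding E'_def induced_edges_def by blast
  have "\<not> (\<exists>u v w. {u, v} \<notin> E' \<and> {v, w} \<notin> E' \<and> {u, w} \<notin> E' \<and>
               {u, v} \<in> D_sigma V' \<tau> E' \<and> {v, w} \<in> D_sigma V' \<tau> E' \<and> {u, w} \<in> D_sigma V' \<tau> E')"
  proof
    assume "\<exists>u v w. {u, v} \<notin> E' \<and> {v, w} \<notin> E' \<and> {u, w} \<notin> E' \<and>
               {u, v} \<in> D_sigma V' \<tau> E' \<and> {v, w} \<in> D_sigma V' \<tau> E' \<and> {u, w} \<in> D_sigma V' \<tau> E'"
    then obtain u v w where h: "{u, v} \<notin> E'" "{v, w} \<notin> E'" "{u, w} \<notin> E'"
      "{u, v} \<in> D_sigma V' \<tau> E'" "{v, w} \<in> D_sigma V' \<tau> E'" "{u, w} \<in> D_sigma V' \<tau> E'" by blast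
    have "{u, v} \<notin> E" "{v, w} \<notin> E" "{u, w} \<notin> E" using notE h by auto
    moreover have "{u, v} \<in> D_sigma V \<sigma> E" "{v, w} \<in> D_sigma V \<sigma> E" "{u, w} \<in> D_sigma V \<sigma> E"
      using DD h by auto
    ultimately show False using nobad by blast
  qed
  then show ?thesis
    unfolding E'_def[symmetric] generalized_bartlett_def
    using bijt by blast
qed

end
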